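(* Let $k\geq2$ and let $L=(l_1,\dots,l_k)$ be generic and reduced positive integers with sum $n$. Let $\xi$ be a closed edge-path in $Tonn^{n,k}(L)$ making $p_i\geq0$ steps of type $i$ (in the order $E_1^{p_1}E_2^{p_2}\cdots E_k^{p_k}$), which represents a non-trivial class in $H_1(Tonn^{n,k}(L);\mathbb{Z})$. Then $p_i\geq3$ for some $i\in[k]$. Moreover, $\omega(\xi)=\sum_{i}p_ia_i$ cannot be written as $a_I-a_J$ for any subsets $I,J\subseteq[k]$.
   Context: $L$ is generic if for all $I,J\subseteq[k]$, $\sum_{i\in I}l_i=\sum_{j\in J}l_j$ implies $I=J$; reduced if $\gcd(l_1,\dots,l_k)=1$. The generalized tonnetz $Tonn^{n,k}(L)$ is the simplicial complex on vertex set $\mathbb{Z}_n$ whose maximal simplices are $\Delta(x;\sigma)=\{x,\,x+l_{\sigma(1)},\dots,x+l_{\sigma(1)}+\dots+l_{\sigma(k-1)}\}$ for $x\in\mathbb{Z}_n$, $\sigma\in S_k$. A step of type $i$ is an oriented 1-simplex from $y$ to $y+l_i$. $a_i=ke_i-(1,\dots,1)\in\mathbb{Z}^k$ (the value of the canonical vector cocycle $\omega$ on a step of type $i$), and for $I\subseteq[k]$, $a_I=\sum_{i\in I}a_i$ (with $a_\emptyset=0$). *)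

theory Defs
  imports "HOL-Combinatorics.Permutations"
begin

text \<open>Vertices of the tonnetz are residues mod n, represented
  by integers in \<open>{0..<n}\<close>.\<close>

definition generic :: "nat \<Rightarrow> (nat \<Rightarrow> nat) \<Rightarrow> bool" where
  "generic k l \<longleftrightarrow> (\<forall>I J. I \<subseteq> {1..k} \<longrightarrow> J \<subseteq> {1..k} \<longrightarrow>
      sum l I = sum l J \<longrightarrow> I = J)"

definition reduced :: "nat \<Rightarrow> (nat \<Rightarrow> nat) \<Rightarrow> bool" where
  "reduced k l \<longleftrightarrow> Gcd (l ` {1..k}) = 1"

definition tonn_simplex :: "int \<Rightarrow> nat \<Rightarrow> (nat \<Rightarrow> nat) \<Rightarrow> int \<Rightarrow> (nat \<Rightarrow> nat) \<Rightarrow> int set" where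
  "tonn_simplex n k l x \<sigma> = {(x + (\<Sum>j\<in>{1..m}. int (l (\<sigma> j)))) mod n | m. m < k}"

definition tonn_faces :: "int \<Rightarrow> nat \<Rightarrow> (nat \<Rightarrow> nat) \<Rightarrow> int set set" where
  "tonn_faces n k l = {T. \<exists>x \<sigma>. \<sigma> permutes {1..k} \<and> T \<subseteq> tonn_simplex n k l x \<sigma>}"

text \<open>Simplicial integer 1-chains: functions on ordered pairs of vertices
  (oriented 1-simplices); the oriented edge (u,v) is the chain \<open>[u,v] = -[v,u]\<close>.\<close>
definition edge_chain :: "int \<Rightarrow> int \<Rightarrow> (int \<times> int \<Rightarrow> int)" where
  "edge_chain u v = (\<lambda>e. (if e = (u, v) then 1 else 0) - (if e = (v, u) then 1 else 0))"

definition tri_boundary :: "int \<times> int \<times> int \<Rightarrow> (int \<times> int \<Rightarrow> int)" where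
  "tri_boundary t = (case t of (a, b, c) \<Rightarrow>
     (\<lambda>e. edge_chain a b e + edge_chain b c e + edge_chain c a e))"

definition is_boundary :: "int \<Rightarrow> nat \<Rightarrow> (nat \<Rightarrow> nat) \<Rightarrow> (int \<times> int \<Rightarrow> int) \<Rightarrow> bool" where
  "is_boundary n k l c \<longleftrightarrow> (\<exists>S f. finite S \<and>
     (\<forall>(a, b, d) \<in> S. {a, b, d} \<in> tonn_faces n k l \<and> card {a, b, d} = 3) \<and>
     c = (\<lambda>e. \<Sum>t\<in>S. f t * tri_boundary t e))"

definition path_types :: "nat \<Rightarrow> (nat \<Rightarrow> nat) \<Rightarrow> nat list" where
  "path_types k p = concat (map (\<lambda>i. replicate (p i) i) [1..<Suc k])"

definition path_vertex :: "int \<Rightarrow> (nat \<Rightarrow> nat) \<Rightarrow> nat list \<Rightarrow> int \<Rightarrow> nat \<Rightarrow> int" where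
  "path_vertex n l ts x0 m = (x0 + (\<Sum>j<m. int (l (ts ! j)))) mod n"

definition path_chain :: "int \<Rightarrow> (nat \<Rightarrow> nat) \<Rightarrow> nat list \<Rightarrow> int \<Rightarrow> (int \<times> int \<Rightarrow> int)" where
  "path_chain n l ts x0 = (\<lambda>e. \<Sum>m<length ts.
      edge_chain (path_vertex n l ts x0 m) (path_vertex n l ts x0 (Suc m)) e)"

definition a_vec :: "nat \<Rightarrow> nat \<Rightarrow> nat \<Rightarrow> int" where
  "a_vec k i j = (if j = i then int k else 0) - 1"

definition a_set :: "nat \<Rightarrow> nat set \<Rightarrow> nat \<Rightarrow> int" where
  "a_set k I j = (\<Sum>i\<in>I. a_vec k i j)"

end

theory Submission
  imports Defs "HOL-Library.Multiset"
begin


fun ch :: "int \<Rightarrow> (nat \<Rightarrow> nat) \<Rightarrow> int \<Rightarrow> nat list \<Rightarrow> int \<times> int \<Rightarrow> int" where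
  "ch n l y [] = (\<lambda>e. 0)"
| "ch n l y (t#ts) = (\<lambda>e. edge_chain (y mod n) ((y + int (l t)) mod n) e + ch n l (y + int (l t)) ts e)"

lemma path_vertex_Cons: "path_vertex n l (t#ts) y (Suc m) = path_vertex n l ts (y + int (l t)) m"
  unfolding path_vertex_def by (simp add: sum.lessThan_Suc_shift add.assoc del: sum.lessThan_Suc)

lemma path_vertex_0: "path_vertex n l ts y 0 = y mod n"
  unfolding path_vertex_def by simp

lemma path_chain_ch: "path_chain n l ts y = ch n l y ts"
proof (induction ts arbitrary: y)
  case Nil
  then show ?case by (simp add: path_chain_def)
next
  case (Cons t ts)
  show ?case
  proof
    fix e
    have "path_chain n l (t#ts) y e = edge_chain (path_vertex n l (t#ts) y 0) (path_vertex n l (t#ts) y (Suc 0)) e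
       + (\<Sum>m<length ts. edge_chain (path_vertex n l (t#ts) y (Suc m)) (path_vertex n l (t#ts) y (Suc (Suc m))) e)"
      unfolding path_chain_def by (simp add: sum.lessThan_Suc_shift del: sum.lessThan_Suc)
    also have "\<dots> = ch n l y (t#ts) e"
      using fun_cong[OF Cons.IH[of "y + int (l t)"], of e]
      unfolding path_vertex_Cons path_chain_def path_vertex_0 by simp
    finally show "path_chain n l (t#ts) y e = ch n l y (t#ts) e" .
  qed
qed

lemma ch_append: "ch n l y (ts @ us) e = ch n l y ts e + ch n l (y + sum_list (map (\<lambda>t. int (l t)) ts)) us e"
  by (induction ts arbitrary: y) (simp_all add: add.assoc)

lemma ch_mod: "y mod n = z mod n \<Longrightarrow> ch n l y ts = ch n l z ts"
proof (induction ts arbitrary: y z)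
  case Nil
  show ?case by (simp only: ch.simps)
next
  case (Cons t ts)
  have 1: "(y + int (l t)) mod n = (z + int (l t)) mod n"
    by (rule mod_add_cong[OF Cons.prems refl])
  then have 2: "ch n l (y + int (l t)) ts = ch n l (z + int (l t)) ts" by (rule Cons.IH)
  show ?case by (simp only: ch.simps 1 2 Cons.prems)
qed

lemma edge_chain_anti: "edge_chain u v e + edge_chain v u e = 0"
  unfolding edge_chain_def by auto

lemma edge_chain_refl: "edge_chain u u e = 0"
  unfolding edge_chain_def by auto

lemma bnd_zero: "is_boundary n k l (\<lambda>e. 0)"
  unfolding is_boundary_def by (rule exI[of _ "{}"]) auto

lemma bnd_cong: "is_boundary n k l c \<Longrightarrow> (\<And>e. c e = d e) \<Longrightarrow> is_boundary n k l d"
proof -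
  assume "is_boundary n k l c" "\<And>e. c e = d e"
  then have "c = d" by auto
  then show ?thesis using \<open>is_boundary n k l c\<close> by simp
qed

lemma bnd_add: "is_boundary n k l c \<Longrightarrow> is_boundary n k l d \<Longrightarrow> is_boundary n k l (\<lambda>e. c e + d e)"
proof -
  assume c: "is_boundary n k l c" and d: "is_boundary n k l d"
  obtain S1 f1 where 1: "finite S1" "\<forall>(a, b, d) \<in> S1. {a, b, d} \<in> tonn_faces n k l \<and> card {a, b, d} = 3"
     "c = (\<lambda>e. \<Sum>t\<in>S1. f1 t * tri_boundary t e)"
    using c unfolding is_boundary_def by (elim exE conjE) (rule that)
  obtain S2 f2 where 2: "finite S2" "\<forall>(a, b, d) \<in> S2. {a, b, d} \<in> tonn_faces n k l \<and> card {a, b, d} = 3"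
     "d = (\<lambda>e. \<Sum>t\<in>S2. f2 t * tri_boundary t e)"
    using d unfolding is_boundary_def by (elim exE conjE) (rule that)
  define f where "f t = (if t \<in> S1 then f1 t else 0) + (if t \<in> S2 then f2 t else 0)" for t
  have eq: "(\<lambda>e. c e + d e) = (\<lambda>e. \<Sum>t\<in>S1 \<union> S2. f t * tri_boundary t e)"
  proof
    fix e
    have "(\<Sum>t\<in>S1 \<union> S2. f t * tri_boundary t e) =
      (\<Sum>t\<in>S1 \<union> S2. (if t \<in> S1 then f1 t * tri_boundary t e else 0)) + (\<Sum>t\<in>S1 \<union> S2. (if t \<in> S2 then f2 t * tri_boundary t e else 0))"
      unfolding f_def sum.distrib[symmetric] by (rule sum.cong) (auto simp: algebra_simps)
    also have "(\<Sum>t\<in>S1 \<union> S2. (if t \<in> S1 then f1 t * tri_boundary t e else 0)) = (\<Sum>t\<in>S1. f1 t * tri_boundary t e)"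
      using 1(1) 2(1) by (simp add: sum.If_cases Int_absorb1)
    also have "(\<Sum>t\<in>S1 \<union> S2. (if t \<in> S2 then f2 t * tri_boundary t e else 0)) = (\<Sum>t\<in>S2. f2 t * tri_boundary t e)"
      using 1(1) 2(1) by (simp add: sum.If_cases Int_absorb2)
    finally show "c e + d e = (\<Sum>t\<in>S1 \<union> S2. f t * tri_boundary t e)" using 1(3) 2(3) by simp
  qed
  have fin: "finite (S1 \<union> S2)" using 1(1) 2(1) by simp
  have val: "\<forall>(a, b, d) \<in> S1 \<union> S2. {a, b, d} \<in> tonn_faces n k l \<and> card {a, b, d} = 3"
    using 1(2) 2(2) by blast
  show ?thesis unfolding is_boundary_def
    by (intro exI[of _ "S1 \<union> S2"] exI[of _ f] conjI fin val eq)
qed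

lemma bnd_neg: "is_boundary n k l c \<Longrightarrow> is_boundary n k l (\<lambda>e. - c e)"
proof -
  assume "is_boundary n k l c"
  then obtain S f where 1: "finite S" "\<forall>(a, b, d) \<in> S. {a, b, d} \<in> tonn_faces n k l \<and> card {a, b, d} = 3"
     "c = (\<lambda>e. \<Sum>t\<in>S. f t * tri_boundary t e)"
    unfolding is_boundary_def by (elim exE conjE) (rule that)
  have "(\<lambda>e. - c e) = (\<lambda>e. \<Sum>t\<in>S. (- f t) * tri_boundary t e)"
    using 1(3) by (simp add: sum_negf)
  then show ?thesis unfolding is_boundary_def
    by (intro exI[of _ S] exI[of _ "\<lambda>t. - f t"] conjI 1(1) 1(2))
qed

lemma bnd_tri: "{a, b, d} \<in> tonn_faces n k l \<Longrightarrow> card {a, b, d} = 3 \<Longrightarrow> is_boundary n k l (tri_boundary (a, b, d))"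
proof -
  assume "{a, b, d} \<in> tonn_faces n k l" "card {a, b, d} = 3"
  moreover have "tri_boundary (a, b, d) = (\<lambda>e. \<Sum>t\<in>{(a,b,d)}. 1 * tri_boundary t e)" by simp
  ultimately show ?thesis unfolding is_boundary_def
    by (intro exI[of _ "{(a,b,d)}"] exI[of _ "\<lambda>t. 1"] conjI) auto
qed

lemma bnd_diff: "is_boundary n k l (\<lambda>e. a e - b e) \<Longrightarrow> is_boundary n k l (\<lambda>e. b e - c e) \<Longrightarrow> is_boundary n k l (\<lambda>e. a e - c e)"
proof -
  assume "is_boundary n k l (\<lambda>e. a e - b e)" "is_boundary n k l (\<lambda>e. b e - c e)"
  then have "is_boundary n k l (\<lambda>e. (a e - b e) + (b e - c e))" by (rule bnd_add)
  then show ?thesis by (rule bnd_cong) (simp only: diff_add_cancel add_diff_eq)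
qed

lemma mod_shift_ne: "0 < (a::int) \<Longrightarrow> a < n \<Longrightarrow> (y + a) mod n \<noteq> y mod n"
proof
  assume "0 < a" "a < n" "(y + a) mod n = y mod n"
  then have "n dvd (y + a) - y" by (simp only: mod_eq_dvd_iff)
  then have "n dvd a" by simp
  then show False using zdvd_not_zless[OF \<open>0 < a\<close> \<open>a < n\<close>] by simp
qed



lemma sum_upt_conv: "sum_list (map f [Suc 0..<Suc M]) = (sum f {1..M} :: int)"
  by (simp only: sum_list_distinct_conv_sum_set[OF distinct_upt] set_upt atLeastLessThanSuc_atLeastAtMost One_nat_def)

lemma ch_step: "ch n l y [1..<Suc (Suc M)] e = ch n l y [1..<Suc M] e +
   edge_chain ((y + (\<Sum>j\<in>{1..M}. int (l j))) mod n) ((y + (\<Sum>j\<in>{1..Suc M}. int (l j))) mod n) e"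
proof -
  have "ch n l y [1..<Suc (Suc M)] e = ch n l y ([1..<Suc M] @ [Suc M]) e" by (subst upt_Suc_append) auto
  also have "\<dots> = ch n l y [1..<Suc M] e + ch n l (y + (\<Sum>j\<in>{1..M}. int (l j))) [Suc M] e"
    by (simp only: ch_append sum_upt_conv One_nat_def)
  also have "\<dots> = ch n l y [1..<Suc M] e +
   edge_chain ((y + (\<Sum>j\<in>{1..M}. int (l j))) mod n) ((y + (\<Sum>j\<in>{1..Suc M}. int (l j))) mod n) e"
    by (simp add: add.assoc)
  finally show ?thesis .
qed

locale tz =
  fixes n :: int and k :: nat and l :: "nat \<Rightarrow> nat"
  assumes k2: "k \<ge> 2" and pos: "\<forall>i\<in>{1..k}. l i > 0" and gen: "generic k l"
    and n_def: "n = (\<Sum>i\<in>{1..k}. int (l i))"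
begin

lemma sub_lt: "I \<subseteq> {1..k} \<Longrightarrow> I \<noteq> {1..k} \<Longrightarrow> (\<Sum>i\<in>I. int (l i)) < n"
proof -
  assume a: "I \<subseteq> {1..k}" "I \<noteq> {1..k}"
  then obtain j where j: "j \<in> {1..k}" "j \<notin> I" by blast
  have "(\<Sum>i\<in>I. int (l i)) \<le> (\<Sum>i\<in>{1..k} - {j}. int (l i))"
    using a j by (intro sum_mono2) auto
  also have "\<dots> < (\<Sum>i\<in>{1..k} - {j}. int (l i)) + int (l j)" using pos j by auto
  also have "\<dots> = n" unfolding n_def using j by (subst sum.remove[of "{1..k}" j]) auto
  finally show ?thesis .
qed

lemma sub_le: "I \<subseteq> {1..k} \<Longrightarrow> (\<Sum>i\<in>I. int (l i)) \<le> n"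
  unfolding n_def by (intro sum_mono2) auto

lemma sub_pos: "I \<subseteq> {1..k} \<Longrightarrow> I \<noteq> {} \<Longrightarrow> 0 < (\<Sum>i\<in>I. int (l i))"
proof -
  assume a: "I \<subseteq> {1..k}" "I \<noteq> {}"
  have "finite I" using a finite_subset by blast
  moreover have "\<forall>i\<in>I. 0 < int (l i)" using a(1) pos by force
  ultimately show ?thesis using a(2) by (intro sum_pos) auto
qed

lemma n_pos: "n > 0" using sub_pos[of "{1..k}"] k2 n_def by auto

lemma single_lt: "i \<in> {1..k} \<Longrightarrow> 0 < int (l i) \<and> int (l i) < n"
proof -
  assume i: "i \<in> {1..k}"
  have "{i} \<noteq> {1..k}"
  proof
    assume "{i} = {1..k}"
    then have "card {1..k} = card {i}" by simp
    then show False using k2 by simp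
  qed
  then show ?thesis using sub_lt[of "{i}"] pos i by auto
qed

abbreviation B where "B c \<equiv> is_boundary n k l c"

lemma vshift: "0 < a \<Longrightarrow> a < n \<Longrightarrow> (y + a) mod n \<noteq> y mod n"
  by (rule mod_shift_ne)

lemma swap:
  assumes i: "i \<in> {1..k}" and j: "j \<in> {1..k}"
  shows "B (\<lambda>e. ch n l y [i,j] e - ch n l y [j,i] e)"
proof (cases "i = j")
  case True
  then show ?thesis by (intro bnd_cong[OF bnd_zero]) simp
next
  case ij: False
  show ?thesis
  proof (cases "k = 2")
    case True
    then have "{i,j} = {1..k}" using i j ij by auto
    moreover have "(\<Sum>i\<in>{i,j}. int (l i)) = int (l i) + int (l j)" using ij by simp
    ultimately have "int (l i) + int (l j) = n" unfolding n_def by simp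
    then have eq: "(y + int (l i) + int (l j)) mod n = y mod n" "(y + int (l j) + int (l i)) mod n = y mod n"
      by (simp_all add: add.assoc add.commute[of "int (l j)"])
    show ?thesis
    proof (rule bnd_cong[OF bnd_zero])
      fix e
      have "ch n l y [i,j] e = 0" by (simp only: ch.simps eq add_0_right edge_chain_anti)
      moreover have "ch n l y [j,i] e = 0" by (simp only: ch.simps eq add_0_right edge_chain_anti)
      ultimately show "0 = ch n l y [i,j] e - ch n l y [j,i] e" by simp
    qed
  next
    case False
    then have k3: "k \<ge> 3" using k2 by auto
    define v0 vi vj vij where "v0 = y mod n" and "vi = (y + int (l i)) mod n" and "vj = (y + int (l j)) mod n"
      and "vij = (y + int (l i) + int (l j)) mod n"
    have vij': "(y + int (l j) + int (l i)) mod n = vij" unfolding vij_def by (simp add: algebra_simps)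
    have li: "0 < int (l i)" "int (l i) < n" using single_lt[OF i] by auto
    have lj: "0 < int (l j)" "int (l j) < n" using single_lt[OF j] by auto
    have "{i,j} \<noteq> {1..k}"
    proof
      assume "{i,j} = {1..k}"
      then have "card {1..k} = card {i,j}" by simp
      then show False using k3 ij by simp
    qed
    then have lij: "int (l i) + int (l j) < n" using sub_lt[of "{i,j}"] i j ij by simp
    have d1: "vi \<noteq> v0" unfolding vi_def v0_def using vshift li by auto
    have d2: "vij \<noteq> v0" unfolding vij_def v0_def using vshift[of "int (l i) + int (l j)" y] li lj lij by (simp add: add.assoc)
    have d3: "vij \<noteq> vi" unfolding vij_def vi_def using vshift[of "int (l j)" "y + int (l i)"] lj by simp
    have d4: "vj \<noteq> v0" unfolding vj_def v0_def using vshift lj by auto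
    have d5: "vij \<noteq> vj" unfolding vij_def vj_def using vshift[of "int (l i)" "y + int (l j)"] li by (simp add: algebra_simps)
    have face: "{v0, vi, vij} \<in> tonn_faces n k l" if i: "i \<in> {1..k}" and j: "j \<in> {1..k}" and ij: "i \<noteq> j"
      and v0: "v0 = y mod n" and vi: "vi = (y + int (l i)) mod n" and vij: "vij = (y + int (l i) + int (l j)) mod n"
      for i j vi vij
    proof -
      define \<sigma> where "\<sigma> = Transposition.transpose 1 i \<circ> Transposition.transpose 2 (Transposition.transpose 1 i j)"
      have p: "\<sigma> permutes {1..k}" unfolding \<sigma>_def using i j k2
        by (intro permutes_compose permutes_swap_id) (auto simp: transpose_def)
      have s1: "\<sigma> 1 = i" unfolding \<sigma>_def using ij by (auto simp: transpose_def)
      have s2: "\<sigma> 2 = j" unfolding \<sigma>_def using ij by (auto simp: transpose_def)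
      have "{v0, vi, vij} \<subseteq> tonn_simplex n k l y \<sigma>"
        unfolding tonn_simplex_def
      proof (intro subsetI, elim insertE)
        fix x assume "x = v0"
        then show "x \<in> {(y + (\<Sum>j\<in>{1..m}. int (l (\<sigma> j)))) mod n |m. m < k}"
          using k2 v0 by (intro CollectI exI[of _ 0]) auto
      next
        fix x assume "x = vi"
        then show "x \<in> {(y + (\<Sum>j\<in>{1..m}. int (l (\<sigma> j)))) mod n |m. m < k}"
          using k2 vi s1 by (intro CollectI exI[of _ 1]) auto
      next
        fix x assume "x = vij"
        then show "x \<in> {(y + (\<Sum>j\<in>{1..m}. int (l (\<sigma> j)))) mod n |m. m < k}"
          using k3 vij s1 s2 by (intro CollectI exI[of _ 2]) (auto simp: numeral_2_eq_2 add.assoc)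
      qed auto
      then show ?thesis unfolding tonn_faces_def using p by blast
    qed
    have t1: "B (tri_boundary (v0, vi, vij))"
      using face[OF i j ij v0_def vi_def vij_def] d1 d2 d3 by (intro bnd_tri) auto
    have t2: "B (tri_boundary (v0, vj, vij))"
      using face[OF j i, of vj vij] ij v0_def vj_def vij' d4 d5 d2 by (intro bnd_tri) auto
    have "B (\<lambda>e. tri_boundary (v0, vi, vij) e + - tri_boundary (v0, vj, vij) e)"
      by (intro bnd_add t1 bnd_neg t2)
    then show ?thesis
    proof (rule bnd_cong)
      fix e
      show "tri_boundary (v0, vi, vij) e + - tri_boundary (v0, vj, vij) e = ch n l y [i, j] e - ch n l y [j, i] e"
      proof -
        have w: "(y + (int (l i) + int (l j))) mod n = vij" "(y + (int (l j) + int (l i))) mod n = vij"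
          unfolding vij_def by (simp_all add: algebra_simps)
        show ?thesis
          unfolding tri_boundary_def
          by (simp add: v0_def[symmetric] vi_def[symmetric] vj_def[symmetric] w add.assoc)
      qed
    qed
  qed
qed


lemma vS_lt: "1 \<le> M \<Longrightarrow> M < k \<Longrightarrow> 0 < (\<Sum>j\<in>{1..M}. int (l j)) \<and> (\<Sum>j\<in>{1..M}. int (l j)) < n"
proof -
  assume M: "1 \<le> M" "M < k"
  have "k \<in> {1..k}" "k \<notin> {1..M}" using M k2 by auto
  then have "{1..M} \<noteq> {1..k}" by blast
  then show ?thesis using sub_lt[of "{1..M}"] sub_pos[of "{1..M}"] M by auto
qed

lemma fan_aux:
  fixes y :: int
  defines "v \<equiv> \<lambda>m. (y + (\<Sum>j\<in>{1..m}. int (l j))) mod n"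
  shows "1 \<le> M \<Longrightarrow> M < k \<Longrightarrow> B (\<lambda>e. ch n l y [1..<Suc M] e + edge_chain (v M) (v 0) e)"
proof (induction M rule: nat_induct_at_least)
  case base
  show ?case
    by (rule bnd_cong[OF bnd_zero]) (simp add: v_def edge_chain_anti)
next
  case (Suc M)
  have M: "1 \<le> M" "Suc M < k" using Suc by auto
  have IH: "B (\<lambda>e. ch n l y [1..<Suc M] e + edge_chain (v M) (v 0) e)" using Suc by auto
  have s0: "v 0 = y mod n" unfolding v_def by simp
  have sS: "v (Suc M) = (y + (\<Sum>j\<in>{1..M}. int (l j)) + int (l (Suc M))) mod n"
    unfolding v_def by (simp add: add.assoc)
  have a: "0 < (\<Sum>j\<in>{1..M}. int (l j)) \<and> (\<Sum>j\<in>{1..M}. int (l j)) < n" using vS_lt M by auto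
  have "1 \<le> Suc M" by simp
  from vS_lt[OF this M(2)]
  have b: "0 < (\<Sum>j\<in>{1..Suc M}. int (l j)) \<and> (\<Sum>j\<in>{1..Suc M}. int (l j)) < n" .
  have c: "0 < int (l (Suc M)) \<and> int (l (Suc M)) < n" using single_lt M by auto
  have d1: "v M \<noteq> v 0" unfolding v_def using vshift a by auto
  have d2: "v (Suc M) \<noteq> v 0" unfolding v_def using vshift b by auto
  have d3: "v (Suc M) \<noteq> v M" unfolding sS unfolding v_def using vshift c by auto
  have face: "{v 0, v M, v (Suc M)} \<in> tonn_faces n k l"
  proof -
    have "v m \<in> tonn_simplex n k l y id" if "m < k" for m
      unfolding tonn_simplex_def v_def using that by auto
    then have "{v 0, v M, v (Suc M)} \<subseteq> tonn_simplex n k l y id"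
      using M by auto
    then show ?thesis unfolding tonn_faces_def using permutes_id by blast
  qed
  have t: "B (tri_boundary (v 0, v M, v (Suc M)))"
    using face d1 d2 d3 by (intro bnd_tri) auto
  have "B (\<lambda>e. (ch n l y [1..<Suc M] e + edge_chain (v M) (v 0) e) + tri_boundary (v 0, v M, v (Suc M)) e)"
    by (intro bnd_add IH t)
  then show ?case
  proof (rule bnd_cong)
    fix e
    have ch: "ch n l y [1..<Suc (Suc M)] e = ch n l y [1..<Suc M] e + edge_chain (v M) (v (Suc M)) e"
      unfolding v_def by (rule ch_step)
    show "ch n l y [1..<Suc M] e + edge_chain (v M) (v 0) e + tri_boundary (v 0, v M, v (Suc M)) e =
      ch n l y [1..<Suc (Suc M)] e + edge_chain (v (Suc M)) (v 0) e"
      unfolding ch tri_boundary_def using edge_chain_anti[of "v M" "v 0" e] by simp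
  qed
qed

lemma fan: "B (ch n l y [1..<Suc k])"
proof -
  define v where "v \<equiv> \<lambda>m. (y + (\<Sum>j\<in>{1..m}. int (l j))) mod n"
  obtain K where k: "k = Suc K" using k2 by (cases k) auto
  have "B (\<lambda>e. ch n l y [1..<Suc K] e + edge_chain (v K) (v 0) e)"
    unfolding v_def using fan_aux[of K y] k2 k by simp
  then show ?thesis
  proof (rule bnd_cong)
    fix e
    have vk: "v (Suc K) = v 0" unfolding v_def using n_def k by simp
    have "ch n l y [1..<Suc k] e = ch n l y [1..<Suc K] e + edge_chain (v K) (v (Suc K)) e"
      unfolding k v_def by (rule ch_step)
    then show "ch n l y [1..<Suc K] e + edge_chain (v K) (v 0) e = ch n l y [1..<Suc k] e"
      using vk by simp
  qed
qed


lemma bubble: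
  assumes u: "u \<in> {1..k}"
  shows "set as \<subseteq> {1..k} \<Longrightarrow> B (\<lambda>e. ch n l y (as @ u # bs) e - ch n l y (u # as @ bs) e)"
proof (induction as arbitrary: y)
  case Nil
  then show ?case by (intro bnd_cong[OF bnd_zero]) simp
next
  case (Cons a as)
  have a: "a \<in> {1..k}" and as: "set as \<subseteq> {1..k}" using Cons.prems by auto
  have 1: "B (\<lambda>e. ch n l y (a # as @ u # bs) e - ch n l y (a # u # as @ bs) e)"
    using Cons.IH[OF as, of "y + int (l a)"] by (rule bnd_cong) simp
  have 2: "B (\<lambda>e. ch n l y (a # u # as @ bs) e - ch n l y (u # a # as @ bs) e)"
    using swap[OF a u, of y]
  proof (rule bnd_cong)
    fix e
    have "ch n l y (a # u # as @ bs) e = ch n l y [a, u] e + ch n l (y + int (l a) + int (l u)) (as @ bs) e"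
      using ch_append[of n l y "[a,u]" "as @ bs" e] by (simp add: add.assoc)
    moreover have "ch n l y (u # a # as @ bs) e = ch n l y [u, a] e + ch n l (y + int (l a) + int (l u)) (as @ bs) e"
      using ch_append[of n l y "[u,a]" "as @ bs" e] by (simp add: algebra_simps)
    ultimately show "ch n l y [a, u] e - ch n l y [u, a] e = ch n l y (a # u # as @ bs) e - ch n l y (u # a # as @ bs) e"
      by simp
  qed
  show ?case using bnd_diff[OF 1 2] by simp
qed

lemma perm:
  "mset ts = mset us \<Longrightarrow> set us \<subseteq> {1..k} \<Longrightarrow> B (\<lambda>e. ch n l y ts e - ch n l y us e)"
proof (induction us arbitrary: ts y)
  case Nil
  then show ?case by (intro bnd_cong[OF bnd_zero]) simp
next
  case (Cons u us)
  have "u \<in> set ts" using Cons.prems(1) by (metis list.set_intros(1) set_mset_mset)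
  then obtain as bs where ts: "ts = as @ u # bs" by (meson split_list)
  have st: "set ts = set (u # us)" using Cons.prems(1) by (metis set_mset_mset)
  have u: "u \<in> {1..k}" and as: "set as \<subseteq> {1..k}" and us: "set us \<subseteq> {1..k}"
    using Cons.prems(2) st ts by auto
  have 1: "B (\<lambda>e. ch n l y ts e - ch n l y (u # as @ bs) e)"
    unfolding ts by (rule bubble[OF u as])
  have "mset (as @ bs) = mset us" using Cons.prems(1) ts by simp
  from Cons.IH[OF this us, of "y + int (l u)"]
  have 2: "B (\<lambda>e. ch n l y (u # as @ bs) e - ch n l y (u # us) e)"
    by (rule bnd_cong) simp
  show ?case using bnd_diff[OF 1 2] by simp
qed

lemma const_path: "B (ch n l y (concat (replicate c [1..<Suc k])))"
proof (induction c arbitrary: y)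
  case 0
  then show ?case by (rule bnd_cong[OF bnd_zero]) simp
next
  case (Suc c)
  have sw: "sum_list (map (\<lambda>t. int (l t)) [1..<Suc k]) = n"
    unfolding n_def using sum_upt_conv[of "\<lambda>t. int (l t)" k] by simp
  have m: "(y + n) mod n = y mod n" by simp
  have "B (\<lambda>e. ch n l y [1..<Suc k] e + ch n l y (concat (replicate c [1..<Suc k])) e)"
    using fan Suc.IH by (rule bnd_add)
  then show ?case
  proof (rule bnd_cong)
    fix e
    show "ch n l y [1..<Suc k] e + ch n l y (concat (replicate c [1..<Suc k])) e =
      ch n l y (concat (replicate (Suc c) [1..<Suc k])) e"
      using ch_append[of n l y "[1..<Suc k]" "concat (replicate c [1..<Suc k])" e] sw ch_mod[OF m]
      by simp
  qed
qed

end


lemma mset_rep1: "mset (concat (replicate c W)) = repeat_mset c (mset W)"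
  by (induction c) auto

lemma mset_rep2: "mset (concat (map (\<lambda>i. replicate c i) W)) = repeat_mset c (mset W)"
proof (induction W)
  case (Cons w W)
  have "repeat_mset c (add_mset w M) = replicate_mset c w + repeat_mset c M" for M
    by (induction c) auto
  then show ?case using Cons by simp
qed simp

lemma sum_list_concat_map: "sum_list (map f (concat (map g W))) = sum_list (map (\<lambda>i. sum_list (map f (g i))) W)"
  by (induction W) auto

lemma sum_types: "(\<Sum>j<length (path_types k p). f ((path_types k p) ! j)) = (\<Sum>i\<in>{1..k}. int (p i) * (f i :: int))"
proof -
  have "(\<Sum>j<length (path_types k p). f ((path_types k p) ! j)) = sum_list (map f (path_types k p))"
    by (simp add: sum_list_sum_nth atLeast0LessThan)
  also have "\<dots> = sum_list (map (\<lambda>i. int (p i) * f i) [1..<Suc k])"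
    unfolding path_types_def by (simp only: sum_list_concat_map map_replicate sum_list_replicate)
  also have "\<dots> = (\<Sum>i\<in>{1..k}. int (p i) * f i)" using sum_upt_conv by simp
  finally show ?thesis .
qed

context tz begin

lemma sum_ind: "I \<subseteq> {1..k} \<Longrightarrow> (\<Sum>i\<in>{1..k}. (if i \<in> I then 1 else 0) * int (l i)) = (\<Sum>i\<in>I. int (l i))"
proof -
  assume "I \<subseteq> {1..k}"
  then have "(\<Sum>i\<in>I. int (l i)) = (\<Sum>i\<in>{1..k} \<inter> I. int (l i))" by (simp add: Int_absorb1)
  also have "\<dots> = (\<Sum>i\<in>{1..k}. if i \<in> I then int (l i) else 0)" by (rule sum.inter_restrict) simp
  moreover have "(\<Sum>i\<in>{1..k}. (if i \<in> I then 1 else 0) * int (l i)) = (\<Sum>i\<in>{1..k}. if i \<in> I then int (l i) else 0)"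
    by (rule sum.cong) auto
  ultimately show ?thesis by simp
qed

lemma gen_int: "I \<subseteq> {1..k} \<Longrightarrow> J \<subseteq> {1..k} \<Longrightarrow> (\<Sum>i\<in>I. int (l i)) = (\<Sum>i\<in>J. int (l i)) \<Longrightarrow> I = J"
  using gen unfolding generic_def by (metis of_nat_eq_iff of_nat_sum)

lemma key:
  assumes x0: "x0 \<in> {0..<n}"
    and closed: "path_vertex n l (path_types k p) x0 (length (path_types k p)) = x0"
    and I: "I \<subseteq> {1..k}" and J: "J \<subseteq> {1..k}"
    and pc: "\<forall>j\<in>{1..k}. int (p j) = c + (if j \<in> I then 1 else 0) - (if j \<in> J then 1 else 0)"
  shows "B (path_chain n l (path_types k p) x0)"
proof -
  define A where "A = (\<Sum>i\<in>I. int (l i))"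
  define Bs where "Bs = (\<Sum>i\<in>J. int (l i))"
  have T: "(\<Sum>j<length (path_types k p). int (l ((path_types k p) ! j))) = c * n + (A - Bs)"
  proof -
    have "(\<Sum>j<length (path_types k p). int (l ((path_types k p) ! j))) = (\<Sum>i\<in>{1..k}. int (p i) * int (l i))"
      by (rule sum_types)
    also have "\<dots> = (\<Sum>i\<in>{1..k}. c * int (l i) + (if i \<in> I then 1 else 0) * int (l i) - (if i \<in> J then 1 else 0) * int (l i))"
    proof (rule sum.cong[OF refl])
      fix i assume "i \<in> {1..k}"
      then have "int (p i) = c + (if i \<in> I then 1 else 0) - (if i \<in> J then 1 else 0)" using pc by blast
      then show "int (p i) * int (l i) = c * int (l i) + (if i \<in> I then 1 else 0) * int (l i) - (if i \<in> J then 1 else 0) * int (l i)"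
        by (simp only: left_diff_distrib distrib_right)
    qed
    also have "\<dots> = c * n + (A - Bs)"
      unfolding sum_subtractf sum.distrib A_def Bs_def sum_ind[OF I] sum_ind[OF J] n_def sum_distrib_left
      by simp
    finally show ?thesis .
  qed
  have "(x0 + (c * n + (A - Bs))) mod n = x0 mod n"
    using closed x0 unfolding path_vertex_def T by simp
  then have "n dvd (x0 + (c * n + (A - Bs))) - x0" by (simp only: mod_eq_dvd_iff)
  then have "n dvd (A - Bs)" by (simp add: dvd_add_right_iff)
  then obtain t where t: "A - Bs = n * t" by blast
  have bA: "0 \<le> A" "A \<le> n" unfolding A_def using sub_le[OF I] by (auto intro: sum_nonneg)
  have bB: "0 \<le> Bs" "Bs \<le> n" unfolding Bs_def using sub_le[OF J] by (auto intro: sum_nonneg)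
  have np: "n > 0" by (rule n_pos)
  have "n * t \<le> n * 1" "n * (-1) \<le> n * t" using t bA bB by auto
  then have "t \<le> 1" "-1 \<le> t" using mult_le_cancel_left_pos[OF np] by blast+
  then have tc: "t = 0 \<or> t = 1 \<or> t = -1" by auto
  have "\<exists>d. \<forall>j\<in>{1..k}. int (p j) = d"
  proof -
    { assume "t = 0"
      then have "A = Bs" using t by simp
      then have "I = J" using gen_int[OF I J] unfolding A_def Bs_def by simp
      then have ?thesis using pc by auto }
    moreover
    { assume "t = 1"
      then have "A = n" "Bs = 0" using t bA bB by auto
      then have "J = {}" using sub_pos[OF J] unfolding Bs_def by auto
      moreover have "I = {1..k}" using gen_int[OF I, of "{1..k}"] \<open>A = n\<close> unfolding A_def n_def by simp
      ultimately have ?thesis using pc by auto }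
    moreover
    { assume "t = -1"
      then have "A = 0" "Bs = n" using t bA bB by auto
      then have "I = {}" using sub_pos[OF I] unfolding A_def by auto
      moreover have "J = {1..k}" using gen_int[OF J, of "{1..k}"] \<open>Bs = n\<close> unfolding Bs_def n_def by simp
      ultimately have ?thesis using pc by auto }
    ultimately show ?thesis using tc by blast
  qed
  then obtain d where d: "\<forall>j\<in>{1..k}. int (p j) = d" by blast
  then have pd: "\<forall>j\<in>{1..k}. p j = nat d" by (metis nat_int)
  have pt: "path_types k p = concat (map (\<lambda>i. replicate (nat d) i) [1..<Suc k])"
    unfolding path_types_def using pd by (intro arg_cong[where f=concat] map_cong) auto
  have ms: "mset (path_types k p) = mset (concat (replicate (nat d) [1..<Suc k]))"
    unfolding pt mset_rep1 mset_rep2 ..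
  have st: "set (concat (replicate (nat d) [1..<Suc k])) \<subseteq> {1..k}" by auto
  have "B (\<lambda>e. (ch n l x0 (path_types k p) e - ch n l x0 (concat (replicate (nat d) [1..<Suc k])) e)
          + ch n l x0 (concat (replicate (nat d) [1..<Suc k])) e)"
    by (intro bnd_add perm[OF ms st] const_path)
  then show ?thesis unfolding path_chain_ch by (rule bnd_cong) simp
qed

end

theorem proposition5p6:
  fixes k :: nat and l p :: "nat \<Rightarrow> nat" and n x0 :: int
  assumes "k \<ge> 2"
    and "\<forall>i\<in>{1..k}. l i > 0"
    and "generic k l" and "reduced k l"
    and "n = (\<Sum>i\<in>{1..k}. int (l i))"
    and "x0 \<in> {0..<n}"
    and closed: "path_vertex n l (path_types k p) x0 (length (path_types k p)) = x0"
    and nontrivial: "\<not> is_boundary n k l (path_chain n l (path_types k p) x0)"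
  shows "(\<exists>i\<in>{1..k}. p i \<ge> 3) \<and>
    \<not> (\<exists>I J. I \<subseteq> {1..k} \<and> J \<subseteq> {1..k} \<and>
        (\<forall>j\<in>{1..k}. (\<Sum>i\<in>{1..k}. int (p i) * a_vec k i j) = a_set k I j - a_set k J j))"
proof -
  interpret tz n k l using assms(1,2,3,5) by unfold_locales
  have part2: "\<not> (\<exists>I J. I \<subseteq> {1..k} \<and> J \<subseteq> {1..k} \<and>
        (\<forall>j\<in>{1..k}. (\<Sum>i\<in>{1..k}. int (p i) * a_vec k i j) = a_set k I j - a_set k J j))"
  proof
    assume "\<exists>I J. I \<subseteq> {1..k} \<and> J \<subseteq> {1..k} \<and>
        (\<forall>j\<in>{1..k}. (\<Sum>i\<in>{1..k}. int (p i) * a_vec k i j) = a_set k I j - a_set k J j)"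
    then obtain I J where I: "I \<subseteq> {1..k}" and J: "J \<subseteq> {1..k}"
      and H: "\<forall>j\<in>{1..k}. (\<Sum>i\<in>{1..k}. int (p i) * a_vec k i j) = a_set k I j - a_set k J j" by blast
    have fI: "finite I" and fJ: "finite J" using I J finite_subset by blast+
    define P where "P = (\<Sum>i\<in>{1..k}. int (p i))"
    have L: "(\<Sum>i\<in>{1..k}. int (p i) * a_vec k i j) = int k * int (p j) - P" if "j \<in> {1..k}" for j
    proof -
      have "(\<Sum>i\<in>{1..k}. int (p i) * a_vec k i j) = (\<Sum>i\<in>{1..k}. (if i = j then int (p i) * int k else 0) - int (p i))"
        unfolding a_vec_def by (rule sum.cong) (auto simp: algebra_simps)
      also have "\<dots> = int k * int (p j) - P" unfolding sum_subtractf P_def using that by simp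
      finally show ?thesis .
    qed
    have AS: "a_set k K j = (if j \<in> K then int k else 0) - int (card K)" if "finite K" for K j
    proof -
      have "a_set k K j = (\<Sum>i\<in>K. (if i = j then int k else 0) - 1)"
        unfolding a_set_def a_vec_def by (rule sum.cong) auto
      also have "\<dots> = (if j \<in> K then int k else 0) - int (card K)" unfolding sum_subtractf using that by simp
      finally show ?thesis .
    qed
    define q where "q j = int (p j) - (if j \<in> I then 1 else 0) + (if j \<in> J then 1 else 0)" for j
    have E: "int k * q j = P - int (card I) + int (card J)" if "j \<in> {1..k}" for j
    proof -
      have "int k * int (p j) - P = ((if j \<in> I then int k else 0) - int (card I)) - ((if j \<in> J then int k else 0) - int (card J))"
        using H that L[OF that] AS[OF fI] AS[OF fJ] by simp
      then show ?thesis unfolding q_def by (auto simp: algebra_simps split: if_splits)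
    qed
    have k0: "int k \<noteq> 0" using assms(1) by simp
    have "1 \<in> {1..k}" using assms(1) by simp
    have pc: "\<forall>j\<in>{1..k}. int (p j) = q 1 + (if j \<in> I then 1 else 0) - (if j \<in> J then 1 else 0)"
    proof
      fix j assume j: "j \<in> {1..k}"
      have "int k * q j = int k * q 1" using E[OF j] E[OF \<open>1 \<in> {1..k}\<close>] by simp
      then have "q j = q 1" using k0 by simp
      then show "int (p j) = q 1 + (if j \<in> I then 1 else 0) - (if j \<in> J then 1 else 0)"
        unfolding q_def by simp
    qed
    have "is_boundary n k l (path_chain n l (path_types k p) x0)"
      by (rule key[OF assms(6) closed I J pc])
    then show False using nontrivial by simp
  qed
  have part1: "\<exists>i\<in>{1..k}. p i \<ge> 3"
  proof (rule ccontr)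
    assume "\<not> (\<exists>i\<in>{1..k}. p i \<ge> 3)"
    then have lt: "\<forall>i\<in>{1..k}. p i \<le> 2" by auto
    define I where "I = {i\<in>{1..k}. 1 \<le> p i}"
    define J where "J = {i\<in>{1..k}. p i \<le> 1}"
    have pc: "\<forall>j\<in>{1..k}. int (p j) = 1 + (if j \<in> I then 1 else 0) - (if j \<in> J then 1 else 0)"
    proof
      fix j assume j: "j \<in> {1..k}"
      then have "p j \<le> 2" using lt by blast
      then have "p j = 0 \<or> p j = 1 \<or> p j = 2" by linarith
      then show "int (p j) = 1 + (if j \<in> I then 1 else 0) - (if j \<in> J then 1 else 0)"
        unfolding I_def J_def using j by (elim disjE) auto
    qed
    have "is_boundary n k l (path_chain n l (path_types k p) x0)"
      by (rule key[OF assms(6) closed _ _ pc]) (auto simp: I_def J_def)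
    then show False using nontrivial by simp
  qed
  show ?thesis using part1 part2 by blast
qed

end
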